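(* There exist full amicable orthogonal designs $AOD\big(16;\ 2,2,2,10;\ 2,2,2,10\big)$ and $AOD\big(24;\ 2,2,2,18;\ 2,2,2,18\big)$. Consequently, for every integer $n>4$ there exists a full $$AOD\Big(2^n;\ 2^{n-3}_{(3)},\,10,\,10,\,5\cdot2^2,\ldots,5\cdot2^{n-4};\ 2^{n-3}_{(3)},\,5\cdot2^{n-3}\Big),$$ and for every integer $n>3$ there exists a full $$AOD\Big(3\cdot2^n;\ 2^{n-2}_{(3)},\,18,\,18,\,9\cdot2^2,\ldots,9\cdot2^{n-3};\ 2^{n-2}_{(3)},\,9\cdot2^{n-2}\Big).$$ (In the first type the entries after $10,10$ are $5\cdot 2^j$ for $j=2,\ldots,n-4$, and analogously for the second.)
   Context: The notation $u_{(k)}$ in a type means that $u$ is repeated $k$ times. An orthogonal design $OD(m;c_1,\ldots,c_k)$ is an $m\times m$ matrix $X$ with entries from $\{0,\pm x_1,\ldots,\pm x_k\}$, where $x_1,\ldots,x_k$ are commuting indeterminates, such that $XX^{\rm T}=(\sum_j c_jx_j^2)I_m$. An amicable orthogonal design $AOD(m;c_1,\ldots,c_k;d_1,\ldots,d_\ell)$ is a pair $(X;Y)$ where $X$ is an $OD(m;c_1,\ldots,c_k)$ in indeterminates $x_1,\ldots,x_k$, $Y$ is an $OD(m;d_1,\ldots,d_\ell)$ in indeterminates $y_1,\ldots,y_\ell$ disjoint from the $x_i$, and $XY^{\rm T}=YX^{\rm T}$. It is full if neither $X$ nor $Y$ has a zero entry. *)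

theory Defs
  imports Complex_Main
begin

text \<open>A design of order m in k indeterminates is encoded as a function
  D :: nat => nat => int * nat; the entry (i,j) (for i,j < m) is
  fst (D i j) * x_(snd (D i j)), where fst (D i j) is in {-1,0,1} and
  snd (D i j) < k. Indeterminates are indexed from 0.\<close>

type_synonym design = "nat \<Rightarrow> nat \<Rightarrow> int \<times> nat"

definition wf_design :: "nat \<Rightarrow> nat \<Rightarrow> design \<Rightarrow> bool" where
  "wf_design m k D \<longleftrightarrow>
     (\<forall>i<m. \<forall>j<m. fst (D i j) \<in> {-1, 0, 1} \<and> snd (D i j) < k)"

definition dval :: "design \<Rightarrow> (nat \<Rightarrow> real) \<Rightarrow> nat \<Rightarrow> nat \<Rightarrow> real" where
  "dval D x i j = real_of_int (fst (D i j)) * x (snd (D i j))"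

text \<open>Orthogonal design OD(m; c_1,...,c_k): X X^T = (sum c_j x_j^2) I_m as a polynomial
  identity in the commuting indeterminates (equivalently, for all real values).\<close>
definition is_OD :: "nat \<Rightarrow> nat list \<Rightarrow> design \<Rightarrow> bool" where
  "is_OD m cs X \<longleftrightarrow> wf_design m (length cs) X \<and>
     (\<forall>x. \<forall>i<m. \<forall>j<m.
        (\<Sum>l<m. dval X x i l * dval X x j l) =
        (if i = j then (\<Sum>t<length cs. real (cs ! t) * (x t)\<^sup>2) else 0))"

text \<open>Amicable orthogonal design AOD(m; cs; ds): X in indeterminates x, Y in disjoint
  indeterminates y, with X Y^T = Y X^T.\<close>
definition is_AOD :: "nat \<Rightarrow> nat list \<Rightarrow> nat list \<Rightarrow> design \<Rightarrow> design \<Rightarrow> bool" where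
  "is_AOD m cs ds X Y \<longleftrightarrow> is_OD m cs X \<and> is_OD m ds Y \<and>
     (\<forall>x y. \<forall>i<m. \<forall>j<m.
        (\<Sum>l<m. dval X x i l * dval Y y j l) = (\<Sum>l<m. dval Y y i l * dval X x j l))"

definition full_design :: "nat \<Rightarrow> design \<Rightarrow> bool" where
  "full_design m D \<longleftrightarrow> (\<forall>i<m. \<forall>j<m. fst (D i j) \<noteq> 0)"

definition exists_full_AOD :: "nat \<Rightarrow> nat list \<Rightarrow> nat list \<Rightarrow> bool" where
  "exists_full_AOD m cs ds \<longleftrightarrow>
     (\<exists>X Y. is_AOD m cs ds X Y \<and> full_design m X \<and> full_design m Y)"

end

theory Submission
  imports Defs
begin


lemma sum_group:
  fixes f :: "nat \<Rightarrow> 'a::comm_monoid_add"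
  shows "(\<Sum>l<a*m. f l) = (\<Sum>q<a. \<Sum>r<m. f (q*m + r))"
proof -
  have "(\<Sum>l<a*m. f l) = (\<Sum>q<a. sum f {q*m..<q*m+m})"
    using sum.nat_group[of f m a] by simp
  also have "\<dots> = (\<Sum>q<a. \<Sum>r<m. f (q*m + r))"
  proof (rule sum.cong[OF refl])
    fix q
    have "sum f {0+q*m..<m+q*m} = (\<Sum>r\<in>{0..<m}. f (r + q*m))"
      by (rule sum.shift_bounds_nat_ivl)
    then show "sum f {q*m..<q*m+m} = (\<Sum>r<m. f (q*m + r))"
      by (simp add: add.commute atLeast0LessThan)
  qed
  finally show ?thesis .
qed

definition cf :: "design \<Rightarrow> design \<Rightarrow> nat \<Rightarrow> nat \<Rightarrow> nat \<Rightarrow> nat \<Rightarrow> nat \<Rightarrow> int" where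
  "cf X Y m i j a b = (\<Sum>l<m. if snd (X i l) = a \<and> snd (Y j l) = b then fst (X i l) * fst (Y j l) else 0)"

lemma coef_rep:
  assumes wX: "wf_design m k X" and wY: "wf_design m k' Y" and i: "i < m" and j: "j < m"
  shows "(\<Sum>l<m. dval X x i l * dval Y y j l) =
         (\<Sum>a<k. \<Sum>b<k'. real_of_int (cf X Y m i j a b) * x a * y b)"
proof -
  have "(\<Sum>a<k. \<Sum>b<k'. real_of_int (cf X Y m i j a b) * x a * y b)
      = (\<Sum>a<k. \<Sum>b<k'. \<Sum>l<m. (if snd (X i l) = a \<and> snd (Y j l) = b then real_of_int (fst (X i l) * fst (Y j l)) * x a * y b else 0))"
  proof (intro sum.cong[OF refl])
    fix a b
    show "real_of_int (cf X Y m i j a b) * x a * y b = (\<Sum>l<m. (if snd (X i l) = a \<and> snd (Y j l) = b then real_of_int (fst (X i l) * fst (Y j l)) * x a * y b else 0))"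
      unfolding cf_def of_int_sum sum_distrib_right by (rule sum.cong) auto
  qed
  also have "\<dots> = (\<Sum>a<k. \<Sum>l<m. \<Sum>b<k'. (if snd (X i l) = a \<and> snd (Y j l) = b then real_of_int (fst (X i l) * fst (Y j l)) * x a * y b else 0))"
    by (rule sum.cong[OF refl], rule sum.swap)
  also have "\<dots> = (\<Sum>l<m. \<Sum>a<k. \<Sum>b<k'. (if snd (X i l) = a \<and> snd (Y j l) = b then real_of_int (fst (X i l) * fst (Y j l)) * x a * y b else 0))"
    by (rule sum.swap)
  also have "\<dots> = (\<Sum>l<m. dval X x i l * dval Y y j l)"
  proof (rule sum.cong[OF refl])
    fix l assume l: "l \<in> {..<m}"
    have a: "snd (X i l) < k" and b: "snd (Y j l) < k'"
      using wX wY i j l unfolding wf_design_def by auto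
    have "(\<Sum>a<k. \<Sum>b<k'. (if snd (X i l) = a \<and> snd (Y j l) = b then real_of_int (fst (X i l) * fst (Y j l)) * x a * y b else 0))
        = (\<Sum>a<k. if snd (X i l) = a then real_of_int (fst (X i l) * fst (Y j l)) * x a * y (snd (Y j l)) else 0)"
    proof (intro sum.cong[OF refl])
      fix a
      show "(\<Sum>b<k'. (if snd (X i l) = a \<and> snd (Y j l) = b then real_of_int (fst (X i l) * fst (Y j l)) * x a * y b else 0))
        = (if snd (X i l) = a then real_of_int (fst (X i l) * fst (Y j l)) * x a * y (snd (Y j l)) else 0)"
      proof (cases "snd (X i l) = a")
        case True
        then show ?thesis using b by (simp add: sum.delta)
      qed simp
    qed
    also have "\<dots> = real_of_int (fst (X i l) * fst (Y j l)) * x (snd (X i l)) * y (snd (Y j l))"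
      using a by (simp add: sum.delta)
    finally show "(\<Sum>a<k. \<Sum>b<k'. (if snd (X i l) = a \<and> snd (Y j l) = b then real_of_int (fst (X i l) * fst (Y j l)) * x a * y b else 0))
        = dval X x i l * dval Y y j l" by (simp add: dval_def)
  qed
  finally show ?thesis by simp
qed

lemma orth_from_cf:
  assumes wf: "wf_design m (length cs) X"
    and H: "\<And>i j a b. i < m \<Longrightarrow> j < m \<Longrightarrow> a < length cs \<Longrightarrow> b < length cs \<Longrightarrow>
      cf X X m i j a b + cf X X m i j b a = (if i = j \<and> a = b then 2 * int (cs!a) else 0)"
  shows "is_OD m cs X"
  unfolding is_OD_def
proof (intro conjI allI impI wf)
  fix x :: "nat \<Rightarrow> real" and i j assume i: "i < m" and j: "j < m"
  let ?k = "length cs"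
  let ?c = "\<lambda>a b. real_of_int (cf X X m i j a b)"
  have Q: "(\<Sum>l<m. dval X x i l * dval X x j l) = (\<Sum>a<?k. \<Sum>b<?k. ?c a b * x a * x b)"
    by (rule coef_rep[OF wf wf i j])
  have Q2: "(\<Sum>a<?k. \<Sum>b<?k. ?c a b * x a * x b) = (\<Sum>a<?k. \<Sum>b<?k. ?c b a * x a * x b)"
    by (subst sum.swap) (simp add: mult_ac)
  have "2 * (\<Sum>a<?k. \<Sum>b<?k. ?c a b * x a * x b) = (\<Sum>a<?k. \<Sum>b<?k. (?c a b + ?c b a) * x a * x b)"
  proof -
    have "2 * (\<Sum>a<?k. \<Sum>b<?k. ?c a b * x a * x b) = (\<Sum>a<?k. \<Sum>b<?k. ?c a b * x a * x b) + (\<Sum>a<?k. \<Sum>b<?k. ?c b a * x a * x b)"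
      using Q2 by simp
    also have "\<dots> = (\<Sum>a<?k. \<Sum>b<?k. (?c a b + ?c b a) * x a * x b)"
      by (simp add: sum.distrib[symmetric] distrib_right)
    finally show ?thesis .
  qed
  also have "\<dots> = (\<Sum>a<?k. \<Sum>b<?k. (if i = j \<and> a = b then 2 * real (cs!a) else 0) * x a * x b)"
  proof (intro sum.cong refl)
    fix a b assume "a \<in> {..<?k}" "b \<in> {..<?k}"
    then have "cf X X m i j a b + cf X X m i j b a = (if i = j \<and> a = b then 2 * int (cs!a) else 0)"
      using H i j by auto
    then have "?c a b + ?c b a = (if i = j \<and> a = b then 2 * real (cs!a) else 0)"
      by (metis (mono_tags, opaque_lifting) of_int_add of_int_0 of_int_mult of_int_numeral of_int_of_nat_eq)
    then show "(?c a b + ?c b a) * x a * x b = (if i = j \<and> a = b then 2 * real (cs!a) else 0) * x a * x b"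
      by simp
  qed
  also have "\<dots> = (if i = j then 2 * (\<Sum>t<?k. real (cs!t) * (x t)\<^sup>2) else 0)"
  proof (cases "i = j")
    case True
    have "(\<Sum>a<?k. \<Sum>b<?k. (if i = j \<and> a = b then 2 * real (cs!a) else 0) * x a * x b)
        = (\<Sum>a<?k. \<Sum>b<?k. (if a = b then 2 * real (cs!a) * x a * x b else 0))"
      using True by (intro sum.cong refl) simp
    also have "\<dots> = (\<Sum>a<?k. 2 * real (cs!a) * x a * x a)"
      by (intro sum.cong refl) (simp add: sum.delta sum.delta')
    also have "\<dots> = 2 * (\<Sum>t<?k. real (cs!t) * (x t)\<^sup>2)"
      by (simp add: sum_distrib_left power2_eq_square mult_ac)
    finally show ?thesis using True by simp
  qed simp
  finally show "(\<Sum>l<m. dval X x i l * dval X x j l) =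
        (if i = j then (\<Sum>t<length cs. real (cs ! t) * (x t)\<^sup>2) else 0)"
    using Q by (cases "i = j") auto
qed

lemma amic_from_cf:
  assumes wX: "wf_design m k X" and wY: "wf_design m k' Y" and i: "i < m" and j: "j < m"
    and H: "\<And>a b. a < k \<Longrightarrow> b < k' \<Longrightarrow> cf X Y m i j a b = cf X Y m j i a b"
  shows "(\<Sum>l<m. dval X x i l * dval Y y j l) = (\<Sum>l<m. dval Y y i l * dval X x j l)"
proof -
  have "(\<Sum>l<m. dval Y y i l * dval X x j l) = (\<Sum>l<m. dval X x j l * dval Y y i l)"
    by (simp add: mult.commute)
  also have "\<dots> = (\<Sum>a<k. \<Sum>b<k'. real_of_int (cf X Y m j i a b) * x a * y b)"
    by (rule coef_rep[OF wX wY j i])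
  also have "\<dots> = (\<Sum>a<k. \<Sum>b<k'. real_of_int (cf X Y m i j a b) * x a * y b)"
    using H by (intro sum.cong refl) auto
  also have "\<dots> = (\<Sum>l<m. dval X x i l * dval Y y j l)"
    by (rule coef_rep[OF wX wY i j, symmetric])
  finally show ?thesis by simp
qed



definition gm :: "nat \<Rightarrow> nat \<Rightarrow> nat \<Rightarrow> int" where
  "gm l c d = [[[1,1],[1,-1]], [[1,-1],[1,1]], [[1,1],[-1,1]], [[-1,1],[1,1]]] ! l ! c ! d"

definition gg :: "nat \<Rightarrow> nat \<Rightarrow> nat \<Rightarrow> nat \<Rightarrow> int" where
  "gg l l' c c' = gm l c 0 * gm l' c' 0 + gm l c 1 * gm l' c' 1"

definition dbl :: "design \<Rightarrow> (nat \<Rightarrow> nat) \<Rightarrow> design" where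
  "dbl B lab i j = (fst (B (i div 2) (j div 2)) * gm (lab (snd (B (i div 2) (j div 2)))) (i mod 2) (j mod 2),
                    snd (B (i div 2) (j div 2)))"

lemma cf_dbl:
  "cf (dbl X lx) (dbl Y ly) (2*m) i j a b = cf X Y m (i div 2) (j div 2) a b * gg (lx a) (ly b) (i mod 2) (j mod 2)"
proof -
  let ?i = "i div 2" and ?j = "j div 2" and ?c = "i mod 2" and ?c' = "j mod 2"
  let ?P = "\<lambda>r. snd (X ?i r) = a \<and> snd (Y ?j r) = b"
  have "cf (dbl X lx) (dbl Y ly) (2*m) i j a b
      = (\<Sum>r<m. \<Sum>d<2. if snd (dbl X lx i (r*2+d)) = a \<and> snd (dbl Y ly j (r*2+d)) = b
            then fst (dbl X lx i (r*2+d)) * fst (dbl Y ly j (r*2+d)) else 0)"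
    unfolding cf_def using sum_group[of _ m 2] by (simp add: mult.commute)
  also have "\<dots> = (\<Sum>r<m. if ?P r then fst (X ?i r) * fst (Y ?j r) * gg (lx a) (ly b) ?c ?c' else 0)"
  proof (rule sum.cong[OF refl])
    fix r
    have d0: "(r*2+0::nat) div 2 = r" "(r*2+0::nat) mod 2 = 0" and d1: "(r*2+1::nat) div 2 = r" "(r*2+1::nat) mod 2 = 1" by presburger+
    show "(\<Sum>d<2. if snd (dbl X lx i (r*2+d)) = a \<and> snd (dbl Y ly j (r*2+d)) = b
            then fst (dbl X lx i (r*2+d)) * fst (dbl Y ly j (r*2+d)) else 0)
        = (if ?P r then fst (X ?i r) * fst (Y ?j r) * gg (lx a) (ly b) ?c ?c' else 0)"
    proof -
      have eX: "\<And>d::nat. d < 2 \<Longrightarrow> dbl X lx i (r*2+d) = (fst (X ?i r) * gm (lx (snd (X ?i r))) ?c d, snd (X ?i r))"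
        unfolding dbl_def by simp
      have eY: "\<And>d::nat. d < 2 \<Longrightarrow> dbl Y ly j (r*2+d) = (fst (Y ?j r) * gm (ly (snd (Y ?j r))) ?c' d, snd (Y ?j r))"
        unfolding dbl_def by simp
      have s2: "\<And>f::nat\<Rightarrow>int. (\<Sum>d<2. f d) = f 0 + f 1" by (simp add: numeral_2_eq_2)
      show ?thesis unfolding s2 using eX[of 0] eX[of 1] eY[of 0] eY[of 1]
        by (auto simp: gg_def algebra_simps)
    qed
  qed
  also have "\<dots> = cf X Y m ?i ?j a b * gg (lx a) (ly b) ?c ?c'"
    unfolding cf_def sum_distrib_right by (rule sum.cong) auto
  finally show ?thesis .
qed



definition mk :: "int list list \<Rightarrow> design" where
  "mk L i j = (sgn (L!i!j), nat \<bar>L!i!j\<bar> - 1)"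

definition rcf :: "int list \<Rightarrow> int list \<Rightarrow> nat \<Rightarrow> nat \<Rightarrow> int" where
  "rcf R S a b = sum_list (map (\<lambda>(e,f). if nat \<bar>e\<bar> - 1 = a \<and> nat \<bar>f\<bar> - 1 = b then sgn e * sgn f else 0) (zip R S))"

definition ok_dims :: "int list list \<Rightarrow> nat \<Rightarrow> bool" where
  "ok_dims L m = (length L = m \<and> list_all (\<lambda>R. length R = m \<and> list_all (\<lambda>e. e \<noteq> 0 \<and> \<bar>e\<bar> \<le> 4) R) L)"

definition chk4O :: "int \<Rightarrow> int \<Rightarrow> nat \<Rightarrow> nat \<Rightarrow> int \<Rightarrow> bool" where
  "chk4O p q la lb t = list_all (\<lambda>(c,c'). p * gg la lb c c' + q * gg lb la c c' = (if c = c' then t else 0))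
     [(0,0),(0,1),(1,0),(1,1)]"

definition chkO :: "int list list \<Rightarrow> (nat \<Rightarrow> nat) \<Rightarrow> nat \<Rightarrow> nat list \<Rightarrow> bool" where
  "chkO L lab m cs = list_all (\<lambda>r. list_all (\<lambda>r'. list_all (\<lambda>a. list_all (\<lambda>b.
     chk4O (rcf (L!r) (L!r') a b) (rcf (L!r) (L!r') b a) (lab a) (lab b) (if r = r' \<and> a = b then 2 * int (cs!a) else 0))
     [0..<4]) [0..<4]) [0..<m]) [0..<m]"

definition chk4A :: "int \<Rightarrow> int \<Rightarrow> nat \<Rightarrow> nat \<Rightarrow> bool" where
  "chk4A p q la lb = list_all (\<lambda>(c,c'). p * gg la lb c c' = q * gg la lb c' c) [(0,0),(0,1),(1,0),(1,1)]"

definition chkA :: "int list list \<Rightarrow> int list list \<Rightarrow> (nat \<Rightarrow> nat) \<Rightarrow> (nat \<Rightarrow> nat) \<Rightarrow> nat \<Rightarrow> bool" where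
  "chkA LX LY lx ly m = list_all (\<lambda>r. list_all (\<lambda>r'. list_all (\<lambda>a. list_all (\<lambda>b.
     chk4A (rcf (LX!r) (LY!r') a b) (rcf (LX!r') (LY!r) a b) (lx a) (ly b))
     [0..<4]) [0..<4]) [0..<m]) [0..<m]"

definition labX :: "nat \<Rightarrow> nat" where "labX v = (if v < 3 then 0 else 1)"
definition labY :: "nat \<Rightarrow> nat" where "labY v = (if v < 3 then 2 else 3)"

definition X8 :: "int list list" where "X8 = [[1,2,3,4,4,4,4,4],[-2,1,-4,-4,-4,3,4,4],[-3,4,1,-4,4,-2,-4,4],[-4,4,4,1,-4,4,-2,-3],[-4,4,-4,4,1,-4,3,-2],[-4,-3,2,-4,4,1,4,-4],[-4,-4,4,2,-3,-4,1,4],[-4,-4,-4,3,2,4,-4,1]]"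
definition Y8 :: "int list list" where "Y8 = [[-2,-3,-1,4,4,4,4,4],[-3,2,-4,-4,-4,-1,4,4],[-1,4,2,-4,4,3,-4,4],[-4,4,4,3,-4,4,1,-2],[-4,4,-4,4,3,-4,-2,-1],[-4,-1,3,-4,4,-2,4,-4],[-4,-4,4,1,-2,-4,-3,4],[-4,-4,-4,-2,-1,4,-4,-3]]"
definition X12 :: "int list list" where "X12 = [[1,2,3,4,4,4,4,4,4,4,4,4],[-2,1,4,4,-4,4,-4,-4,-3,-4,4,4],[-3,-4,1,-4,-4,4,4,4,2,-4,4,-4],[-4,-4,4,1,2,-4,-3,-4,4,4,4,-4],[-4,4,4,-2,1,4,-4,4,-4,4,-3,-4],[-4,-4,-4,4,-4,1,-4,4,4,2,-4,3],[-4,4,-4,3,4,4,1,-4,4,-4,-2,-4],[-4,4,-4,4,-4,-4,4,1,-4,3,4,-2],[-4,3,-2,-4,4,-4,-4,4,1,-4,4,4],[-4,4,4,-4,-4,-2,4,-3,4,1,-4,4],[-4,-4,-4,-4,3,4,2,-4,-4,4,1,4],[-4,-4,4,4,4,-3,4,2,-4,-4,-4,1]]"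
definition Y12 :: "int list list" where "Y12 = [[3,-2,1,4,4,4,4,4,4,4,4,4],[-2,-3,4,4,-4,4,-4,-4,-1,-4,4,4],[1,-4,-3,-4,-4,4,4,4,-2,-4,4,-4],[-4,-4,4,-2,-1,-4,3,-4,4,4,4,-4],[-4,4,4,-1,2,4,-4,4,-4,4,3,-4],[-4,-4,-4,4,-4,1,-4,4,4,3,-4,-2],[-4,4,-4,3,4,4,2,-4,4,-4,1,-4],[-4,4,-4,4,-4,-4,4,1,-4,2,4,3],[-4,-1,-2,-4,4,-4,-4,4,3,-4,4,4],[-4,4,4,-4,-4,3,4,2,4,-1,-4,4],[-4,-4,-4,-4,3,4,1,-4,-4,4,-2,4],[-4,-4,4,4,4,-2,4,3,-4,-4,-4,-1]]"

lemma c8: "ok_dims X8 8 \<and> ok_dims Y8 8 \<and> chkO X8 labX 8 [2,2,2,10] \<and> chkO Y8 labY 8 [2,2,2,10] \<and> chkA X8 Y8 labX labY 8"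
  by code_simp
lemma c12: "ok_dims X12 12 \<and> ok_dims Y12 12 \<and> chkO X12 labX 12 [2,2,2,18] \<and> chkO Y12 labY 12 [2,2,2,18] \<and> chkA X12 Y12 labX labY 12"
  by code_simp


fun hs :: "nat \<Rightarrow> nat \<Rightarrow> nat \<Rightarrow> int" where
  "hs 0 q q' = 1"
| "hs (Suc k) q q' = (if q < 2^k then (if q' < 2^k then hs k q q' else hs k q (q' - 2^k))
                       else (if q' < 2^k then hs k (q - 2^k) q' else - hs k (q - 2^k) (q' - 2^k)))"

fun ds :: "nat \<Rightarrow> nat \<Rightarrow> nat \<Rightarrow> int \<times> nat" where
  "ds 0 q q' = (1, 0)"
| "ds (Suc k) q q' = (if q < 2^k then (if q' < 2^k then ds k q q' else (hs k q (q' - 2^k), Suc k))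
                       else (if q' < 2^k then (- hs k (q - 2^k) q', Suc k) else ds k (q - 2^k) (q' - 2^k)))"

definition Hr :: "nat \<Rightarrow> nat \<Rightarrow> nat \<Rightarrow> real" where "Hr k q l = real_of_int (hs k q l)"
definition Dz :: "nat \<Rightarrow> (nat \<Rightarrow> real) \<Rightarrow> nat \<Rightarrow> nat \<Rightarrow> real" where
  "Dz k z q l = real_of_int (fst (ds k q l)) * z (snd (ds k q l))"

fun wD :: "nat \<Rightarrow> real" where "wD 0 = 1" | "wD (Suc t) = 2^t"
definition dz :: "nat \<Rightarrow> (nat \<Rightarrow> real) \<Rightarrow> real" where "dz k z = (\<Sum>t<Suc k. wD t * (z t)\<^sup>2)"

lemma split2:
  fixes f :: "nat \<Rightarrow> 'a::comm_monoid_add"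
  shows "(\<Sum>l<2^Suc k. f l) = (\<Sum>l<2^k. f l) + (\<Sum>l<2^k. f (2^k + l))"
proof -
  have "(\<Sum>l<2^Suc k. f l) = (\<Sum>l<2*2^k. f l)" by simp
  also have "\<dots> = (\<Sum>q<2. \<Sum>r<2^k. f (q*2^k + r))" by (rule sum_group)
  also have "\<dots> = (\<Sum>l<2^k. f l) + (\<Sum>l<2^k. f (2^k + l))" by (simp add: numeral_2_eq_2)
  finally show ?thesis .
qed

lemma hs_ll: "q < 2^k \<Longrightarrow> l < 2^k \<Longrightarrow> hs (Suc k) q l = hs k q l" by simp
lemma hs_lh: "q < 2^k \<Longrightarrow> l < 2^k \<Longrightarrow> hs (Suc k) q (2^k + l) = hs k q l" by simp
lemma hs_hl: "p < 2^k \<Longrightarrow> l < 2^k \<Longrightarrow> hs (Suc k) (2^k + p) l = hs k p l" by simp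
lemma hs_hh: "p < 2^k \<Longrightarrow> l < 2^k \<Longrightarrow> hs (Suc k) (2^k + p) (2^k + l) = - hs k p l" by simp
lemma ds_ll: "q < 2^k \<Longrightarrow> l < 2^k \<Longrightarrow> ds (Suc k) q l = ds k q l" by simp
lemma ds_lh: "q < 2^k \<Longrightarrow> l < 2^k \<Longrightarrow> ds (Suc k) q (2^k + l) = (hs k q l, Suc k)" by simp
lemma ds_hl: "p < 2^k \<Longrightarrow> l < 2^k \<Longrightarrow> ds (Suc k) (2^k + p) l = (- hs k p l, Suc k)" by simp
lemma ds_hh: "p < 2^k \<Longrightarrow> l < 2^k \<Longrightarrow> ds (Suc k) (2^k + p) (2^k + l) = ds k p l" by simp

lemma Hr_ll: "q < 2^k \<Longrightarrow> l < 2^k \<Longrightarrow> Hr (Suc k) q l = Hr k q l" by (simp add: Hr_def)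
lemma Hr_lh: "q < 2^k \<Longrightarrow> l < 2^k \<Longrightarrow> Hr (Suc k) q (2^k + l) = Hr k q l" by (simp add: Hr_def)
lemma Hr_hl: "p < 2^k \<Longrightarrow> l < 2^k \<Longrightarrow> Hr (Suc k) (2^k + p) l = Hr k p l" by (simp add: Hr_def)
lemma Hr_hh: "p < 2^k \<Longrightarrow> l < 2^k \<Longrightarrow> Hr (Suc k) (2^k + p) (2^k + l) = - Hr k p l" by (simp add: Hr_def)
lemma Dz_ll: "q < 2^k \<Longrightarrow> l < 2^k \<Longrightarrow> Dz (Suc k) z q l = Dz k z q l" by (simp add: Dz_def)
lemma Dz_lh: "q < 2^k \<Longrightarrow> l < 2^k \<Longrightarrow> Dz (Suc k) z q (2^k + l) = z (Suc k) * Hr k q l" by (simp add: Dz_def Hr_def)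
lemma Dz_hl: "p < 2^k \<Longrightarrow> l < 2^k \<Longrightarrow> Dz (Suc k) z (2^k + p) l = - z (Suc k) * Hr k p l" by (simp add: Dz_def Hr_def)
lemma Dz_hh: "p < 2^k \<Longrightarrow> l < 2^k \<Longrightarrow> Dz (Suc k) z (2^k + p) (2^k + l) = Dz k z p l" by (simp add: Dz_def)

lemma Hr_lh': "q < 2^k \<Longrightarrow> l < 2^k \<Longrightarrow> Hr (Suc k) q (l + 2^k) = Hr k q l" by (simp add: Hr_def add.commute)
lemma Hr_hl': "p < 2^k \<Longrightarrow> l < 2^k \<Longrightarrow> Hr (Suc k) (p + 2^k) l = Hr k p l" by (simp add: Hr_def add.commute)
lemma Hr_hh': "p < 2^k \<Longrightarrow> l < 2^k \<Longrightarrow> Hr (Suc k) (p + 2^k) (l + 2^k) = - Hr k p l" by (simp add: Hr_def add.commute)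
lemma Dz_lh': "q < 2^k \<Longrightarrow> l < 2^k \<Longrightarrow> Dz (Suc k) z q (l + 2^k) = z (Suc k) * Hr k q l" by (simp add: Dz_def Hr_def add.commute)
lemma Dz_hl': "p < 2^k \<Longrightarrow> l < 2^k \<Longrightarrow> Dz (Suc k) z (p + 2^k) l = - z (Suc k) * Hr k p l" by (simp add: Dz_def Hr_def add.commute)
lemma Dz_hh': "p < 2^k \<Longrightarrow> l < 2^k \<Longrightarrow> Dz (Suc k) z (p + 2^k) (l + 2^k) = Dz k z p l" by (simp add: Dz_def add.commute)

lemma hi_split: "\<not> q < (2::nat)^k \<Longrightarrow> q < 2^Suc k \<Longrightarrow> \<exists>p. q = 2^k + p \<and> p < 2^k"
proof -
  assume a: "\<not> q < (2::nat)^k" and b: "q < 2^Suc k"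
  have "q - 2^k < 2^k" using a b by simp
  moreover have "q = 2^k + (q - 2^k)" using a by simp
  ultimately show ?thesis by blast
qed
lemmas HDsimps = Hr_ll Hr_lh Hr_hl Hr_hh Dz_ll Dz_lh Dz_hl Dz_hh Hr_lh' Hr_hl' Hr_hh' Dz_lh' Dz_hl' Dz_hh'

lemma H1: "q < 2^k \<Longrightarrow> q' < 2^k \<Longrightarrow> (\<Sum>l<2^k. Hr k q l * Hr k q' l) = (if q = q' then 2^k else 0)"
proof (induction k arbitrary: q q')
  case 0 then show ?case by (simp add: Hr_def)
next
  case (Suc k)
  let ?n = "(2::nat)^k"
  have S: "(\<Sum>l<2^Suc k. Hr (Suc k) q l * Hr (Suc k) q' l)
    = (\<Sum>l<?n. Hr (Suc k) q l * Hr (Suc k) q' l) + (\<Sum>l<?n. Hr (Suc k) q (?n + l) * Hr (Suc k) q' (?n + l))"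
    by (rule split2)
  show ?case
  proof (cases "q < ?n")
    case qlo: True
    show ?thesis
    proof (cases "q' < ?n")
      case True
      then show ?thesis using S qlo Suc.IH[OF qlo True] by (simp add: HDsimps)
    next
      case False
      then obtain p' where p': "q' = ?n + p'" "p' < ?n" using hi_split Suc.prems by blast
      then show ?thesis using S qlo by (simp add: HDsimps sum_negf)
    qed
  next
    case qhi: False
    then obtain p where p: "q = ?n + p" "p < ?n" using hi_split Suc.prems by blast
    show ?thesis
    proof (cases "q' < ?n")
      case True
      then show ?thesis using S p by (simp add: HDsimps sum_negf)
    next
      case False
      then obtain p' where p': "q' = ?n + p'" "p' < ?n" using hi_split Suc.prems by blast
      then show ?thesis using S p Suc.IH[OF p(2) p'(2)] by (simp add: HDsimps)
    qed
  qed
qed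


lemma HD: "q < 2^k \<Longrightarrow> q' < 2^k \<Longrightarrow> (\<Sum>l<2^k. Hr k q l * Dz k z q' l) = (\<Sum>l<2^k. Dz k z q l * Hr k q' l)"
proof (induction k arbitrary: q q')
  case 0 then show ?case by (simp add: Hr_def Dz_def)
next
  case (Suc k)
  let ?n = "(2::nat)^k"
  have S1: "(\<Sum>l<2^Suc k. Hr (Suc k) q l * Dz (Suc k) z q' l)
    = (\<Sum>l<?n. Hr (Suc k) q l * Dz (Suc k) z q' l) + (\<Sum>l<?n. Hr (Suc k) q (?n + l) * Dz (Suc k) z q' (?n + l))"
    by (rule split2)
  have S2: "(\<Sum>l<2^Suc k. Dz (Suc k) z q l * Hr (Suc k) q' l)
    = (\<Sum>l<?n. Dz (Suc k) z q l * Hr (Suc k) q' l) + (\<Sum>l<?n. Dz (Suc k) z q (?n + l) * Hr (Suc k) q' (?n + l))"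
    by (rule split2)
  show ?case
  proof (cases "q < ?n")
    case qlo: True
    show ?thesis
    proof (cases "q' < ?n")
      case True
      then show ?thesis using S1 S2 qlo Suc.IH[OF qlo True] by (simp add: HDsimps algebra_simps)
    next
      case False
      then obtain p' where p': "q' = ?n + p'" "p' < ?n" using hi_split Suc.prems by blast
      then show ?thesis using S1 S2 qlo Suc.IH[OF qlo p'(2)] by (simp add: HDsimps algebra_simps sum_negf)
    qed
  next
    case qhi: False
    then obtain p where p: "q = ?n + p" "p < ?n" using hi_split Suc.prems by blast
    show ?thesis
    proof (cases "q' < ?n")
      case True
      then show ?thesis using S1 S2 p Suc.IH[OF p(2) True] by (simp add: HDsimps algebra_simps sum_negf)
    next
      case False
      then obtain p' where p': "q' = ?n + p'" "p' < ?n" using hi_split Suc.prems by blast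
      then show ?thesis using S1 S2 p Suc.IH[OF p(2) p'(2)] by (simp add: HDsimps algebra_simps sum_negf)
    qed
  qed
qed

lemma dz_Suc: "dz (Suc k) z = dz k z + 2^k * (z (Suc k))\<^sup>2"
  by (simp add: dz_def)

lemma D1: "q < 2^k \<Longrightarrow> q' < 2^k \<Longrightarrow> (\<Sum>l<2^k. Dz k z q l * Dz k z q' l) = (if q = q' then dz k z else 0)"
proof (induction k arbitrary: q q')
  case 0 then show ?case by (simp add: Dz_def dz_def power2_eq_square)
next
  case (Suc k)
  let ?n = "(2::nat)^k"
  let ?z = "z (Suc k)"
  have S: "(\<Sum>l<2^Suc k. Dz (Suc k) z q l * Dz (Suc k) z q' l)
    = (\<Sum>l<?n. Dz (Suc k) z q l * Dz (Suc k) z q' l) + (\<Sum>l<?n. Dz (Suc k) z q (?n + l) * Dz (Suc k) z q' (?n + l))"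
    by (rule split2)
  show ?case
  proof (cases "q < ?n")
    case qlo: True
    show ?thesis
    proof (cases "q' < ?n")
      case True
      have "(\<Sum>l<?n. Dz (Suc k) z q (?n + l) * Dz (Suc k) z q' (?n + l)) = ?z^2 * (\<Sum>l<?n. Hr k q l * Hr k q' l)"
        using qlo True by (simp add: HDsimps sum_distrib_left power2_eq_square mult_ac)
      then show ?thesis using S qlo True Suc.IH[OF qlo True] H1[OF qlo True] by (simp add: HDsimps dz_Suc)
    next
      case False
      then obtain p' where p': "q' = ?n + p'" "p' < ?n" using hi_split Suc.prems by blast
      have "(\<Sum>l<2^Suc k. Dz (Suc k) z q l * Dz (Suc k) z q' l)
          = ?z * ((\<Sum>l<?n. Hr k q l * Dz k z p' l) - (\<Sum>l<?n. Dz k z q l * Hr k p' l))"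
        using S qlo p' by (simp add: HDsimps algebra_simps sum_negf sum_distrib_left sum_subtractf)
      then show ?thesis using HD[OF qlo p'(2)] p' qlo by simp
    qed
  next
    case qhi: False
    then obtain p where p: "q = ?n + p" "p < ?n" using hi_split Suc.prems by blast
    show ?thesis
    proof (cases "q' < ?n")
      case True
      have "(\<Sum>l<2^Suc k. Dz (Suc k) z q l * Dz (Suc k) z q' l)
          = ?z * ((\<Sum>l<?n. Dz k z p l * Hr k q' l) - (\<Sum>l<?n. Hr k p l * Dz k z q' l))"
        using S True p by (simp add: HDsimps algebra_simps sum_negf sum_distrib_left sum_subtractf)
      then show ?thesis using HD[OF p(2) True] p True by simp
    next
      case False
      then obtain p' where p': "q' = ?n + p'" "p' < ?n" using hi_split Suc.prems by blast
      have "(\<Sum>l<?n. Dz (Suc k) z q l * Dz (Suc k) z q' l) = ?z^2 * (\<Sum>l<?n. Hr k p l * Hr k p' l)"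
        using p p' by (simp add: HDsimps sum_distrib_left power2_eq_square mult_ac)
      then show ?thesis using S p p' Suc.IH[OF p(2) p'(2)] H1[OF p(2) p'(2)] by (simp add: HDsimps dz_Suc)
    qed
  qed
qed


lemma hs_pm: "hs k q q' \<in> {-1, 1}"
proof (induction k arbitrary: q q')
  case 0 then show ?case by simp
next
  case (Suc k) then show ?case using Suc.IH[of "q - 2^k" "q' - 2^k"] by auto
qed

lemma ds_pm: "fst (ds k q q') \<in> {-1, 1}"
proof (induction k arbitrary: q q')
  case 0 then show ?case by simp
next
  case (Suc k)
  have "- hs k (q - 2^k) q' \<in> {-1,1}" using hs_pm[of k "q - 2^k" q'] by auto
  then show ?case using Suc hs_pm[of k q "q' - 2^k"] by simp
qed

lemma ds_snd: "snd (ds k q q') \<le> k"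
proof (induction k arbitrary: q q')
  case 0 then show ?case by simp
next
  case (Suc k) then show ?case by (simp add: le_SucI)
qed


definition Ab :: "design \<Rightarrow> (nat \<Rightarrow> real) \<Rightarrow> nat \<Rightarrow> nat \<Rightarrow> real" where
  "Ab X x r l = (if snd (X r l) < 3 then dval X x r l else 0)"
definition Mb :: "design \<Rightarrow> nat \<Rightarrow> nat \<Rightarrow> real" where
  "Mb X r l = (if snd (X r l) < 3 then 0 else real_of_int (fst (X r l)))"

lemma dval_AM:
  assumes "snd (X r l) < 4" shows "dval X x r l = Ab X x r l + x 3 * Mb X r l"
proof (cases "snd (X r l) < 3")
  case False
  then have "snd (X r l) = 3" using assms by linarith
  then show ?thesis by (simp add: Ab_def Mb_def dval_def)
qed (simp add: Ab_def Mb_def)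

lemma Ab_upd: "Ab X (x(3:=s)) r l = Ab X x r l"
  by (simp add: Ab_def dval_def)

lemma sum4:
  fixes f :: "nat \<Rightarrow> real"
  shows "(\<Sum>t<4. f t) = f 0 + f 1 + f 2 + f 3"
  by (simp add: numeral_eq_Suc)

lemma expand_quad:
  fixes A A' M M' :: "nat \<Rightarrow> real" and s :: real
  shows "(\<Sum>l<m. (A l + s * M l) * (A' l + s * M' l)) =
   (\<Sum>l<m. A l * A' l) + s * ((\<Sum>l<m. A l * M' l) + (\<Sum>l<m. M l * A' l)) + s^2 * (\<Sum>l<m. M l * M' l)"
proof -
  have "(\<Sum>l<m. (A l + s * M l) * (A' l + s * M' l)) =
     (\<Sum>l<m. A l * A' l + (s * (A l * M' l) + s * (M l * A' l)) + s^2 * (M l * M' l))"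
    by (rule sum.cong[OF refl]) algebra
  also have "\<dots> = (\<Sum>l<m. A l * A' l) + s * ((\<Sum>l<m. A l * M' l) + (\<Sum>l<m. M l * A' l)) + s^2 * (\<Sum>l<m. M l * M' l)"
    by (simp add: sum.distrib sum_distrib_left distrib_left)
  finally show ?thesis .
qed

lemma base_facts:
  fixes c w :: nat
  assumes AOD: "is_AOD m [c,c,c,w] [c,c,c,w] X Y" and r: "r < m" and r': "r' < m"
  shows "(\<Sum>l<m. Ab X x r l * Ab X x r' l) = (if r = r' then real c * ((x 0)\<^sup>2 + (x 1)\<^sup>2 + (x 2)\<^sup>2) else 0)"
    and "(\<Sum>l<m. Mb X r l * Mb X r' l) = (if r = r' then real w else 0)"
    and "(\<Sum>l<m. Ab X x r l * Mb X r' l) + (\<Sum>l<m. Mb X r l * Ab X x r' l) = 0"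
    and "(\<Sum>l<m. Ab X x r l * dval Y y r' l) = (\<Sum>l<m. dval Y y r l * Ab X x r' l)"
    and "(\<Sum>l<m. Mb X r l * dval Y y r' l) = (\<Sum>l<m. dval Y y r l * Mb X r' l)"
    and "(\<Sum>l<m. dval Y y r l * dval Y y r' l) = (if r = r' then real c * ((y 0)\<^sup>2 + (y 1)\<^sup>2 + (y 2)\<^sup>2) + real w * (y 3)\<^sup>2 else 0)"
proof -
  have oX: "is_OD m [c,c,c,w] X" and oY: "is_OD m [c,c,c,w] Y" and am: "\<And>x y. (\<Sum>l<m. dval X x r l * dval Y y r' l) = (\<Sum>l<m. dval Y y r l * dval X x r' l)"
    using AOD r r' unfolding is_AOD_def by auto
  have len: "length [c,c,c,w] = 4" by simp
  have wf0: "wf_design m (length [c,c,c,w]) X" using oX unfolding is_OD_def by blast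
  then have wf4: "wf_design m 4 X" by (simp only: len)
  have wfX: "\<And>l. l < m \<Longrightarrow> snd (X r l) < 4" "\<And>l. l < m \<Longrightarrow> snd (X r' l) < 4"
    using wf4 r r' unfolding wf_design_def by blast+
  define SAA where "SAA = (\<Sum>l<m. Ab X x r l * Ab X x r' l)"
  define SAM where "SAM = (\<Sum>l<m. Ab X x r l * Mb X r' l)"
  define SMA where "SMA = (\<Sum>l<m. Mb X r l * Ab X x r' l)"
  define SMM where "SMM = (\<Sum>l<m. Mb X r l * Mb X r' l)"
  define T where "T = (if r = r' then real c * ((x 0)\<^sup>2 + (x 1)\<^sup>2 + (x 2)\<^sup>2) else 0)"
  have P: "SAA + s * (SAM + SMA) + s^2 * SMM = T + (if r = r' then real w * s^2 else 0)" for s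
  proof -
    have "(\<Sum>l<m. dval X (x(3:=s)) r l * dval X (x(3:=s)) r' l)
        = (\<Sum>l<m. (Ab X x r l + s * Mb X r l) * (Ab X x r' l + s * Mb X r' l))"
      using wfX by (intro sum.cong refl) (simp add: dval_AM Ab_upd)
    also have "\<dots> = SAA + s * (SAM + SMA) + s^2 * SMM"
      unfolding SAA_def SAM_def SMA_def SMM_def by (rule expand_quad)
    finally have "SAA + s * (SAM + SMA) + s^2 * SMM = (\<Sum>l<m. dval X (x(3:=s)) r l * dval X (x(3:=s)) r' l)" by simp
    also have "\<dots> = (if r = r' then (\<Sum>t<length [c,c,c,w]. real ([c,c,c,w] ! t) * ((x(3:=s)) t)\<^sup>2) else 0)"
      using oX r r' unfolding is_OD_def by blast
    also have "\<dots> = T + (if r = r' then real w * s^2 else 0)"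
      unfolding T_def len sum4 by (simp add: algebra_simps)
    finally show ?thesis .
  qed
  have P0: "SAA = T" using P[of 0] by simp
  have P1: "SAA + (SAM + SMA) + SMM = T + (if r = r' then real w else 0)" using P[of 1] by (cases "r = r'") auto
  have P2: "SAA - (SAM + SMA) + SMM = T + (if r = r' then real w else 0)" using P[of "-1"] by (cases "r = r'") (auto simp: power2_eq_square)
  show "(\<Sum>l<m. Ab X x r l * Ab X x r' l) = (if r = r' then real c * ((x 0)\<^sup>2 + (x 1)\<^sup>2 + (x 2)\<^sup>2) else 0)"
    using P0 unfolding SAA_def T_def .
  show "(\<Sum>l<m. Mb X r l * Mb X r' l) = (if r = r' then real w else 0)"
    using P0 P1 P2 unfolding SMM_def[symmetric] by (cases "r = r'") auto
  show "(\<Sum>l<m. Ab X x r l * Mb X r' l) + (\<Sum>l<m. Mb X r l * Ab X x r' l) = 0"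
    using P0 P1 P2 unfolding SAM_def[symmetric] SMA_def[symmetric] by (cases "r = r'") auto
  have am0: "(\<Sum>l<m. Ab X x r l * dval Y y r' l) = (\<Sum>l<m. dval Y y r l * Ab X x r' l)"
  proof -
    have "(\<Sum>l<m. Ab X x r l * dval Y y r' l) = (\<Sum>l<m. dval X (x(3:=0)) r l * dval Y y r' l)"
      using wfX by (intro sum.cong refl) (simp add: dval_AM Ab_upd)
    also have "\<dots> = (\<Sum>l<m. dval Y y r l * dval X (x(3:=0)) r' l)" by (rule am)
    also have "\<dots> = (\<Sum>l<m. dval Y y r l * Ab X x r' l)"
      using wfX by (intro sum.cong refl) (simp add: dval_AM Ab_upd)
    finally show ?thesis .
  qed
  then show "(\<Sum>l<m. Ab X x r l * dval Y y r' l) = (\<Sum>l<m. dval Y y r l * Ab X x r' l)" .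
  have "(\<Sum>l<m. Ab X x r l * dval Y y r' l) + (\<Sum>l<m. Mb X r l * dval Y y r' l)
      = (\<Sum>l<m. dval X (x(3:=1)) r l * dval Y y r' l)"
    using wfX by (simp add: sum.distrib[symmetric] dval_AM Ab_upd distrib_right)
  also have "\<dots> = (\<Sum>l<m. dval Y y r l * dval X (x(3:=1)) r' l)" by (rule am)
  also have "\<dots> = (\<Sum>l<m. dval Y y r l * Ab X x r' l) + (\<Sum>l<m. dval Y y r l * Mb X r' l)"
    using wfX by (simp add: sum.distrib[symmetric] dval_AM Ab_upd distrib_left)
  finally show "(\<Sum>l<m. Mb X r l * dval Y y r' l) = (\<Sum>l<m. dval Y y r l * Mb X r' l)"
    using am0 by simp
  show "(\<Sum>l<m. dval Y y r l * dval Y y r' l) = (if r = r' then real c * ((y 0)\<^sup>2 + (y 1)\<^sup>2 + (y 2)\<^sup>2) + real w * (y 3)\<^sup>2 else 0)"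
  proof -
    have "(\<Sum>l<m. dval Y y r l * dval Y y r' l) = (if r = r' then (\<Sum>t<length [c,c,c,w]. real ([c,c,c,w] ! t) * (y t)\<^sup>2) else 0)"
      using oY r r' unfolding is_OD_def by blast
    then show ?thesis unfolding len sum4 by (simp add: algebra_simps)
  qed
qed



definition kX :: "nat \<Rightarrow> nat \<Rightarrow> design \<Rightarrow> design" where
  "kX m k X i j = (if snd (X (i mod m) (j mod m)) < 3
      then (fst (X (i mod m) (j mod m)) * hs k (i div m) (j div m), snd (X (i mod m) (j mod m)))
      else (fst (X (i mod m) (j mod m)) * fst (ds k (i div m) (j div m)), 3 + snd (ds k (i div m) (j div m))))"

definition kY :: "nat \<Rightarrow> nat \<Rightarrow> design \<Rightarrow> design" where
  "kY m k Y i j = (fst (Y (i mod m) (j mod m)) * hs k (i div m) (j div m), snd (Y (i mod m) (j mod m)))"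

lemma dval_kX: "dval (kX m k X) x i j = Ab X x (i mod m) (j mod m) * Hr k (i div m) (j div m)
   + Mb X (i mod m) (j mod m) * Dz k (\<lambda>t. x (3+t)) (i div m) (j div m)"
  by (simp add: kX_def dval_def Ab_def Mb_def Hr_def Dz_def)

lemma dval_kY: "dval (kY m k Y) y i j = dval Y y (i mod m) (j mod m) * Hr k (i div m) (j div m)"
  by (simp add: kY_def dval_def Hr_def)

lemma ksum:
  fixes F :: "nat \<Rightarrow> nat \<Rightarrow> real"
  assumes m: "0 < m"
  shows "(\<Sum>l<2^k*m. F (l div m) (l mod m)) = (\<Sum>q<2^k. \<Sum>r<m. F q r)"
proof -
  have "(\<Sum>l<2^k*m. F (l div m) (l mod m)) = (\<Sum>q<2^k. \<Sum>r<m. F ((q*m+r) div m) ((q*m+r) mod m))"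
    by (rule sum_group)
  also have "\<dots> = (\<Sum>q<2^k. \<Sum>r<m. F q r)"
    using m by (intro sum.cong refl) simp
  finally show ?thesis .
qed

lemma sep:
  fixes f g :: "nat \<Rightarrow> real"
  shows "(\<Sum>q<a. \<Sum>r<m. f r * g q) = (\<Sum>r<m. f r) * (\<Sum>q<a. g q)"
  by (simp add: sum_distrib_left sum_distrib_right mult.commute)

lemma kron4:
  fixes A M A' M' H D H' D' :: "nat \<Rightarrow> real"
  shows "(\<Sum>q<a. \<Sum>r<m. (A r * H q + M r * D q) * (A' r * H' q + M' r * D' q)) =
    (\<Sum>r<m. A r*A' r)*(\<Sum>q<a. H q*H' q) + (\<Sum>r<m. M r*M' r)*(\<Sum>q<a. D q*D' q)
  + (\<Sum>r<m. A r*M' r)*(\<Sum>q<a. H q*D' q) + (\<Sum>r<m. M r*A' r)*(\<Sum>q<a. D q*H' q)"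
proof -
  have "(\<Sum>q<a. \<Sum>r<m. (A r * H q + M r * D q) * (A' r * H' q + M' r * D' q)) =
    (\<Sum>q<a. \<Sum>r<m. (A r*A' r)*(H q*H' q) + (M r*M' r)*(D q*D' q) + (A r*M' r)*(H q*D' q) + (M r*A' r)*(D q*H' q))"
    by (intro sum.cong refl) algebra
  also have "\<dots> = (\<Sum>q<a. \<Sum>r<m. (A r*A' r)*(H q*H' q)) + (\<Sum>q<a. \<Sum>r<m. (M r*M' r)*(D q*D' q))
     + (\<Sum>q<a. \<Sum>r<m. (A r*M' r)*(H q*D' q)) + (\<Sum>q<a. \<Sum>r<m. (M r*A' r)*(D q*H' q))"
    by (simp add: sum.distrib)
  also have "\<dots> = (\<Sum>r<m. A r*A' r)*(\<Sum>q<a. H q*H' q) + (\<Sum>r<m. M r*M' r)*(\<Sum>q<a. D q*D' q)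
  + (\<Sum>r<m. A r*M' r)*(\<Sum>q<a. H q*D' q) + (\<Sum>r<m. M r*A' r)*(\<Sum>q<a. D q*H' q)"
    by (simp only: sep)
  finally show ?thesis .
qed

lemma kron2:
  fixes A A' H H' :: "nat \<Rightarrow> real"
  shows "(\<Sum>q<a. \<Sum>r<m. (A r * H q) * (A' r * H' q)) = (\<Sum>r<m. A r*A' r)*(\<Sum>q<a. H q*H' q)"
proof -
  have "(\<Sum>q<a. \<Sum>r<m. (A r * H q) * (A' r * H' q)) = (\<Sum>q<a. \<Sum>r<m. (A r * A' r) * (H q * H' q))"
    by (intro sum.cong refl) (simp add: mult_ac)
  then show ?thesis by (simp only: sep)
qed

lemma kron3:
  fixes A M Y H D :: "nat \<Rightarrow> real"
  shows "(\<Sum>q<a. \<Sum>r<m. (A r * H q + M r * D q) * (Y r * H' q)) =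
    (\<Sum>r<m. A r*Y r)*(\<Sum>q<a. H q*H' q) + (\<Sum>r<m. M r*Y r)*(\<Sum>q<a. D q*H' q)"
proof -
  have "(\<Sum>q<a. \<Sum>r<m. (A r * H q + M r * D q) * (Y r * H' q)) =
     (\<Sum>q<a. \<Sum>r<m. (A r*Y r)*(H q*H' q)) + (\<Sum>q<a. \<Sum>r<m. (M r*Y r)*(D q*H' q))"
    by (simp add: sum.distrib[symmetric] algebra_simps)
  then show ?thesis by (simp only: sep)
qed

lemma kron3':
  fixes A M Y H D :: "nat \<Rightarrow> real"
  shows "(\<Sum>q<a. \<Sum>r<m. (Y r * H q) * (A r * H' q + M r * D q)) =
    (\<Sum>r<m. Y r*A r)*(\<Sum>q<a. H q*H' q) + (\<Sum>r<m. Y r*M r)*(\<Sum>q<a. H q*D q)"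
proof -
  have "(\<Sum>q<a. \<Sum>r<m. (Y r * H q) * (A r * H' q + M r * D q)) =
     (\<Sum>q<a. \<Sum>r<m. (Y r*A r)*(H q*H' q)) + (\<Sum>q<a. \<Sum>r<m. (Y r*M r)*(H q*D q))"
    by (simp add: sum.distrib[symmetric] algebra_simps)
  then show ?thesis by (simp only: sep)
qed



fun wDn :: "nat \<Rightarrow> nat" where "wDn 0 = 1" | "wDn (Suc t) = 2^t"

lemma wD_eq: "wD t = real (wDn t)" by (cases t) auto

lemma sum_add_split:
  fixes f :: "nat \<Rightarrow> real"
  shows "(\<Sum>t<a+b. f t) = (\<Sum>t<a. f t) + (\<Sum>t<b. f (a+t))"
  by (induction b) auto

lemma idx_eq: "0 < m \<Longrightarrow> (i = j) = (i div m = j div m \<and> i mod m = (j::nat) mod m)"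
proof
  assume "i div m = j div m \<and> i mod m = j mod m"
  then have "i div m * m + i mod m = j div m * m + j mod m" by simp
  then show "i = j" by simp
qed simp

theorem kron_AOD:
  fixes c w k :: nat
  assumes AOD: "is_AOD m [c,c,c,w] [c,c,c,w] X Y" and m: "0 < m"
  defines "cs \<equiv> [c*2^k, c*2^k, c*2^k] @ map (\<lambda>t. w * wDn t) [0..<Suc k]"
  defines "ds' \<equiv> [c*2^k, c*2^k, c*2^k, w*2^k]"
  shows "is_AOD (2^k*m) cs ds' (kX m k X) (kY m k Y)"
proof -
  let ?N = "2^k*m"
  have oX: "is_OD m [c,c,c,w] X" and oY: "is_OD m [c,c,c,w] Y" using AOD unfolding is_AOD_def by auto
  have len: "length [c,c,c,w] = 4" by simp
  have wfX: "wf_design m 4 X" using oX unfolding is_OD_def len by blast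
  have wfY: "wf_design m 4 Y" using oY unfolding is_OD_def len by blast
  have qlt: "\<And>i. i < ?N \<Longrightarrow> i div m < 2^k" using m by (simp add: div_less_iff_less_mult mult.commute)
  have rlt: "\<And>i. i mod m < m" using m by simp
  have lcs: "length cs = 4 + k" unfolding cs_def by simp
  
  have wfkX: "wf_design ?N (length cs) (kX m k X)"
    unfolding wf_design_def lcs
  proof (intro allI impI conjI)
    fix i j assume i: "i < ?N" and j: "j < ?N"
    have b: "fst (X (i mod m) (j mod m)) \<in> {-1,0,1}" "snd (X (i mod m) (j mod m)) < 4"
      using wfX rlt unfolding wf_design_def by auto
    show "fst (kX m k X i j) \<in> {-1,0,1}"
      using b(1) hs_pm[of k "i div m" "j div m"] ds_pm[of k "i div m" "j div m"] unfolding kX_def by auto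
    show "snd (kX m k X i j) < 4 + k"
      using b(2) ds_snd[of k "i div m" "j div m"] unfolding kX_def by auto
  qed
  have wfkY: "wf_design ?N (length ds') (kY m k Y)"
    unfolding wf_design_def ds'_def
  proof (intro allI impI conjI)
    fix i j assume i: "i < ?N" and j: "j < ?N"
    have b: "fst (Y (i mod m) (j mod m)) \<in> {-1,0,1}" "snd (Y (i mod m) (j mod m)) < 4"
      using wfY rlt unfolding wf_design_def by auto
    show "fst (kY m k Y i j) \<in> {-1,0,1}"
      using b(1) hs_pm[of k "i div m" "j div m"] unfolding kY_def by auto
    show "snd (kY m k Y i j) < length [c*2^k, c*2^k, c*2^k, w*2^k]"
      using b(2) unfolding kY_def by simp
  qed
  
  have SX: "(\<Sum>l<?N. dval (kX m k X) x i l * dval (kX m k X) x j l)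
     = (\<Sum>q<2^k. \<Sum>r<m. (Ab X x (i mod m) r * Hr k (i div m) q + Mb X (i mod m) r * Dz k (\<lambda>t. x (3+t)) (i div m) q)
                       * (Ab X x (j mod m) r * Hr k (j div m) q + Mb X (j mod m) r * Dz k (\<lambda>t. x (3+t)) (j div m) q))" for x i j
    unfolding dval_kX using ksum[OF m, where F="\<lambda>q r. (Ab X x (i mod m) r * Hr k (i div m) q + Mb X (i mod m) r * Dz k (\<lambda>t. x (3+t)) (i div m) q)
                       * (Ab X x (j mod m) r * Hr k (j div m) q + Mb X (j mod m) r * Dz k (\<lambda>t. x (3+t)) (j div m) q)"] .
  have SY: "(\<Sum>l<?N. dval (kY m k Y) y i l * dval (kY m k Y) y j l)
     = (\<Sum>q<2^k. \<Sum>r<m. (dval Y y (i mod m) r * Hr k (i div m) q) * (dval Y y (j mod m) r * Hr k (j div m) q))" for y i j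
    unfolding dval_kY using ksum[OF m, where F="\<lambda>q r. (dval Y y (i mod m) r * Hr k (i div m) q) * (dval Y y (j mod m) r * Hr k (j div m) q)"] .
  have SXY: "(\<Sum>l<?N. dval (kX m k X) x i l * dval (kY m k Y) y j l)
     = (\<Sum>q<2^k. \<Sum>r<m. (Ab X x (i mod m) r * Hr k (i div m) q + Mb X (i mod m) r * Dz k (\<lambda>t. x (3+t)) (i div m) q)
                       * (dval Y y (j mod m) r * Hr k (j div m) q))" for x y i j
    unfolding dval_kX dval_kY using ksum[OF m, where F="\<lambda>q r. (Ab X x (i mod m) r * Hr k (i div m) q + Mb X (i mod m) r * Dz k (\<lambda>t. x (3+t)) (i div m) q)
                       * (dval Y y (j mod m) r * Hr k (j div m) q)"] .
  have SYX: "(\<Sum>l<?N. dval (kY m k Y) y i l * dval (kX m k X) x j l)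
     = (\<Sum>q<2^k. \<Sum>r<m. (dval Y y (i mod m) r * Hr k (i div m) q)
          * (Ab X x (j mod m) r * Hr k (j div m) q + Mb X (j mod m) r * Dz k (\<lambda>t. x (3+t)) (j div m) q))" for x y i j
    unfolding dval_kX dval_kY using ksum[OF m, where F="\<lambda>q r. (dval Y y (i mod m) r * Hr k (i div m) q)
          * (Ab X x (j mod m) r * Hr k (j div m) q + Mb X (j mod m) r * Dz k (\<lambda>t. x (3+t)) (j div m) q)"] .
  
  have TX: "(\<Sum>t<length cs. real (cs ! t) * (x t)\<^sup>2)
      = 2^k * (real c * ((x 0)\<^sup>2 + (x 1)\<^sup>2 + (x 2)\<^sup>2)) + real w * dz k (\<lambda>t. x (3+t))" for x
  proof -
    have "(\<Sum>t<length cs. real (cs ! t) * (x t)\<^sup>2) = (\<Sum>t<3+Suc k. real (cs ! t) * (x t)\<^sup>2)"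
      unfolding lcs by simp
    also have "\<dots> = (\<Sum>t<3. real (cs ! t) * (x t)\<^sup>2) + (\<Sum>t<Suc k. real (cs ! (3+t)) * (x (3+t))\<^sup>2)"
      by (rule sum_add_split)
    also have "(\<Sum>t<3. real (cs ! t) * (x t)\<^sup>2) = 2^k * (real c * ((x 0)\<^sup>2 + (x 1)\<^sup>2 + (x 2)\<^sup>2))"
    proof -
      have s3: "\<And>f::nat\<Rightarrow>real. (\<Sum>t<3. f t) = f 0 + f 1 + f 2" by (simp add: numeral_eq_Suc)
      show ?thesis unfolding s3 cs_def by (simp add: algebra_simps)
    qed
    also have "(\<Sum>t<Suc k. real (cs ! (3+t)) * (x (3+t))\<^sup>2) = real w * dz k (\<lambda>t. x (3+t))"
      unfolding dz_def cs_def sum_distrib_left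
      by (intro sum.cong refl) (auto simp: nth_append wD_eq less_Suc_eq)
    finally show ?thesis .
  qed
  have TY: "(\<Sum>t<length ds'. real (ds' ! t) * (y t)\<^sup>2)
      = 2^k * (real c * ((y 0)\<^sup>2 + (y 1)\<^sup>2 + (y 2)\<^sup>2) + real w * (y 3)\<^sup>2)" for y
  proof -
    have l4: "length ds' = 4" unfolding ds'_def by simp
    show ?thesis unfolding l4 sum4 by (simp add: ds'_def algebra_simps)
  qed
  have odX: "is_OD ?N cs (kX m k X)"
    unfolding is_OD_def
  proof (intro conjI allI impI wfkX)
    fix x :: "nat \<Rightarrow> real" and i j assume i: "i < ?N" and j: "j < ?N"
    let ?r = "i mod m" and ?r' = "j mod m" and ?q = "i div m" and ?q' = "j div m" and ?z = "\<lambda>t. x (3+t)"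
    have "(\<Sum>l<?N. dval (kX m k X) x i l * dval (kX m k X) x j l)
      = (\<Sum>r<m. Ab X x ?r r * Ab X x ?r' r) * (\<Sum>q<2^k. Hr k ?q q * Hr k ?q' q)
      + (\<Sum>r<m. Mb X ?r r * Mb X ?r' r) * (\<Sum>q<2^k. Dz k ?z ?q q * Dz k ?z ?q' q)
      + (\<Sum>r<m. Ab X x ?r r * Mb X ?r' r) * (\<Sum>q<2^k. Hr k ?q q * Dz k ?z ?q' q)
      + (\<Sum>r<m. Mb X ?r r * Ab X x ?r' r) * (\<Sum>q<2^k. Dz k ?z ?q q * Hr k ?q' q)"
      unfolding SX by (rule kron4)
    also have "\<dots> = (\<Sum>r<m. Ab X x ?r r * Ab X x ?r' r) * (\<Sum>q<2^k. Hr k ?q q * Hr k ?q' q)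
      + (\<Sum>r<m. Mb X ?r r * Mb X ?r' r) * (\<Sum>q<2^k. Dz k ?z ?q q * Dz k ?z ?q' q)
      + ((\<Sum>r<m. Ab X x ?r r * Mb X ?r' r) + (\<Sum>r<m. Mb X ?r r * Ab X x ?r' r)) * (\<Sum>q<2^k. Hr k ?q q * Dz k ?z ?q' q)"
      using HD[OF qlt[OF i] qlt[OF j], of ?z] by (simp add: algebra_simps)
    also have "\<dots> = (if ?r = ?r' then real c * ((x 0)\<^sup>2 + (x 1)\<^sup>2 + (x 2)\<^sup>2) else 0) * (if ?q = ?q' then 2^k else 0)
      + (if ?r = ?r' then real w else 0) * (if ?q = ?q' then dz k ?z else 0)"
      using base_facts(1)[OF AOD rlt rlt, where x=x] base_facts(2)[OF AOD rlt rlt] base_facts(3)[OF AOD rlt rlt, where x=x] H1[OF qlt[OF i] qlt[OF j]] D1[OF qlt[OF i] qlt[OF j], of ?z]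
      by simp
    also have "\<dots> = (if i = j then (\<Sum>t<length cs. real (cs ! t) * (x t)\<^sup>2) else 0)"
      unfolding TX idx_eq[OF m, of i j] by (auto simp: algebra_simps)
    finally show "(\<Sum>l<?N. dval (kX m k X) x i l * dval (kX m k X) x j l) = (if i = j then (\<Sum>t<length cs. real (cs ! t) * (x t)\<^sup>2) else 0)" .
  qed
  have odY: "is_OD ?N ds' (kY m k Y)"
    unfolding is_OD_def
  proof (intro conjI allI impI wfkY)
    fix y :: "nat \<Rightarrow> real" and i j assume i: "i < ?N" and j: "j < ?N"
    let ?r = "i mod m" and ?r' = "j mod m" and ?q = "i div m" and ?q' = "j div m"
    have "(\<Sum>l<?N. dval (kY m k Y) y i l * dval (kY m k Y) y j l)
      = (\<Sum>r<m. dval Y y ?r r * dval Y y ?r' r) * (\<Sum>q<2^k. Hr k ?q q * Hr k ?q' q)"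
      unfolding SY by (rule kron2)
    also have "\<dots> = (if ?r = ?r' then real c * ((y 0)\<^sup>2 + (y 1)\<^sup>2 + (y 2)\<^sup>2) + real w * (y 3)\<^sup>2 else 0) * (if ?q = ?q' then 2^k else 0)"
      using base_facts(6)[OF AOD rlt rlt, where y=y] H1[OF qlt[OF i] qlt[OF j]] by simp
    also have "\<dots> = (if i = j then (\<Sum>t<length ds'. real (ds' ! t) * (y t)\<^sup>2) else 0)"
      unfolding TY idx_eq[OF m, of i j] by (auto simp: algebra_simps)
    finally show "(\<Sum>l<?N. dval (kY m k Y) y i l * dval (kY m k Y) y j l) = (if i = j then (\<Sum>t<length ds'. real (ds' ! t) * (y t)\<^sup>2) else 0)" .
  qed
  have am: "(\<Sum>l<?N. dval (kX m k X) x i l * dval (kY m k Y) y j l) = (\<Sum>l<?N. dval (kY m k Y) y i l * dval (kX m k X) x j l)"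
    if i: "i < ?N" and j: "j < ?N" for x y :: "nat \<Rightarrow> real" and i j
  proof -
    let ?r = "i mod m" and ?r' = "j mod m" and ?q = "i div m" and ?q' = "j div m" and ?z = "\<lambda>t. x (3+t)"
    have "(\<Sum>l<?N. dval (kX m k X) x i l * dval (kY m k Y) y j l)
      = (\<Sum>r<m. Ab X x ?r r * dval Y y ?r' r) * (\<Sum>q<2^k. Hr k ?q q * Hr k ?q' q)
      + (\<Sum>r<m. Mb X ?r r * dval Y y ?r' r) * (\<Sum>q<2^k. Dz k ?z ?q q * Hr k ?q' q)"
      unfolding SXY by (rule kron3)
    also have "\<dots> = (\<Sum>r<m. dval Y y ?r r * Ab X x ?r' r) * (\<Sum>q<2^k. Hr k ?q q * Hr k ?q' q)
      + (\<Sum>r<m. dval Y y ?r r * Mb X ?r' r) * (\<Sum>q<2^k. Hr k ?q q * Dz k ?z ?q' q)"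
      using base_facts(4)[OF AOD rlt rlt, where x=x and y=y] base_facts(5)[OF AOD rlt rlt, where y=y] HD[OF qlt[OF i] qlt[OF j], of ?z] by simp
    also have "\<dots> = (\<Sum>l<?N. dval (kY m k Y) y i l * dval (kX m k X) x j l)"
      unfolding SYX by (rule kron3'[symmetric])
    finally show ?thesis .
  qed
  show ?thesis unfolding is_AOD_def using odX odY am by blast
qed

lemma kron_full:
  assumes m: "0 < m" and fX: "full_design m X" and fY: "full_design m Y"
  shows "full_design (2^k*m) (kX m k X)" "full_design (2^k*m) (kY m k Y)"
proof -
  have rlt: "\<And>i. i mod m < m" using m by simp
  show "full_design (2^k*m) (kX m k X)"
    unfolding full_design_def kX_def
    using fX rlt hs_pm ds_pm unfolding full_design_def by (auto simp: mult_eq_0_iff) (metis empty_iff insert_iff zero_neq_neg_one zero_neq_one)+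
  show "full_design (2^k*m) (kY m k Y)"
    unfolding full_design_def kY_def
    using fY rlt hs_pm unfolding full_design_def by (auto simp: mult_eq_0_iff) (metis empty_iff insert_iff zero_neq_neg_one zero_neq_one)+
qed



lemma sum_list_zip:
  assumes "length R = m" "length S = m"
  shows "sum_list (map f (zip R S)) = (\<Sum>l<m. f (R!l, S!l))"
  using assms by (simp add: sum_list_sum_nth lessThan_atLeast0)

lemma ok_dimsD:
  assumes "ok_dims L m" "r < m"
  shows "length (L!r) = m" "\<And>l. l < m \<Longrightarrow> L!r!l \<noteq> 0 \<and> \<bar>L!r!l\<bar> \<le> 4" "length L = m"
proof -
  have lL: "length L = m" and all: "\<forall>R\<in>set L. length R = m \<and> (\<forall>e\<in>set R. e \<noteq> 0 \<and> \<bar>e\<bar> \<le> 4)"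
    using assms(1) unfolding ok_dims_def list_all_iff by auto
  have mem: "L!r \<in> set L" using assms(2) lL by simp
  show "length (L!r) = m" using all mem by blast
  show "\<And>l. l < m \<Longrightarrow> L!r!l \<noteq> 0 \<and> \<bar>L!r!l\<bar> \<le> 4"
  proof -
    fix l assume l: "l < m"
    have "L!r!l \<in> set (L!r)" using l all mem by simp
    then show "L!r!l \<noteq> 0 \<and> \<bar>L!r!l\<bar> \<le> 4" using all mem by blast
  qed
  show "length L = m" by (rule lL)
qed

lemma rcf_cf:
  assumes "ok_dims L m" "ok_dims L' m" "r < m" "r' < m"
  shows "rcf (L!r) (L'!r') a b = cf (mk L) (mk L') m r r' a b"
proof -
  have "rcf (L!r) (L'!r') a b = (\<Sum>l<m. (\<lambda>(e,f). if nat \<bar>e\<bar> - 1 = a \<and> nat \<bar>f\<bar> - 1 = b then sgn e * sgn f else 0) (L!r!l, L'!r'!l))"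
    unfolding rcf_def by (rule sum_list_zip[OF ok_dimsD(1)[OF assms(1,3)] ok_dimsD(1)[OF assms(2,4)]])
  then show ?thesis unfolding cf_def mk_def fst_conv snd_conv by simp
qed

lemma mk_wf:
  assumes "ok_dims L m"
  shows "wf_design m 4 (mk L)" "full_design m (mk L)"
proof -
  have e: "\<And>i j. i < m \<Longrightarrow> j < m \<Longrightarrow> L!i!j \<noteq> 0 \<and> \<bar>L!i!j\<bar> \<le> 4" using ok_dimsD(2)[OF assms] by blast
  show "wf_design m 4 (mk L)" unfolding wf_design_def mk_def
  proof (intro allI impI conjI)
    fix i j assume "i < m" "j < m"
    then have "L!i!j \<noteq> 0" "\<bar>L!i!j\<bar> \<le> 4" using e by auto
    then show "fst (sgn (L!i!j), nat \<bar>L!i!j\<bar> - 1) \<in> {-1,0,1}" "snd (sgn (L!i!j), nat \<bar>L!i!j\<bar> - 1) < 4"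
      by (auto simp: sgn_if)
  qed
  show "full_design m (mk L)" unfolding full_design_def mk_def using e by (auto simp: sgn_if)
qed

lemma lt2: "c < (2::nat) \<Longrightarrow> c = 0 \<or> c = 1" by auto

lemma chk4O_D:
  assumes "chk4O p q la lb t" "c < 2" "c' < 2"
  shows "p * gg la lb c c' + q * gg lb la c c' = (if c = c' then t else 0)"
  using assms lt2[of c] lt2[of c'] unfolding chk4O_def by auto

lemma chk4A_D:
  assumes "chk4A p q la lb" "c < 2" "c' < 2"
  shows "p * gg la lb c c' = q * gg la lb c' c"
  using assms lt2[of c] lt2[of c'] unfolding chk4A_def by auto

lemma gm_pm: "l < 4 \<Longrightarrow> c < 2 \<Longrightarrow> d < 2 \<Longrightarrow> gm l c d \<in> {-1, 1}"
proof -
  assume "l < 4" "c < 2" "d < 2"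
  then have "l = 0 \<or> l = 1 \<or> l = 2 \<or> l = 3" "c = 0 \<or> c = 1" "d = 0 \<or> d = 1" by auto
  then show ?thesis unfolding gm_def by (elim disjE) (simp_all add: numeral_eq_Suc)
qed

lemma dbl_wf:
  assumes "wf_design m 4 B" "full_design m B" "\<And>v. v < 4 \<Longrightarrow> lab v < 4"
  shows "wf_design (2*m) 4 (dbl B lab)" "full_design (2*m) (dbl B lab)"
proof -
  have h: "\<And>i j. i < 2*m \<Longrightarrow> j < 2*m \<Longrightarrow> fst (B (i div 2) (j div 2)) \<in> {-1,1} \<and> snd (B (i div 2) (j div 2)) < 4 \<and> gm (lab (snd (B (i div 2) (j div 2)))) (i mod 2) (j mod 2) \<in> {-1,1}"
  proof -
    fix i j assume "i < 2*m" "j < 2*m"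
    then have ij: "i div 2 < m" "j div 2 < m" by auto
    have "fst (B (i div 2) (j div 2)) \<in> {-1,0,1}" "snd (B (i div 2) (j div 2)) < 4" "fst (B (i div 2) (j div 2)) \<noteq> 0"
      using assms(1,2) ij unfolding wf_design_def full_design_def by auto
    moreover have "gm (lab (snd (B (i div 2) (j div 2)))) (i mod 2) (j mod 2) \<in> {-1,1}"
      using gm_pm assms(3) calculation(2) by simp
    ultimately show "fst (B (i div 2) (j div 2)) \<in> {-1,1} \<and> snd (B (i div 2) (j div 2)) < 4 \<and> gm (lab (snd (B (i div 2) (j div 2)))) (i mod 2) (j mod 2) \<in> {-1,1}"
      by auto
  qed
  show "wf_design (2*m) 4 (dbl B lab)" unfolding wf_design_def dbl_def using h by fastforce
  show "full_design (2*m) (dbl B lab)" unfolding full_design_def dbl_def using h by fastforce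
qed

lemma labX_lt: "labX v < 4" and labY_lt: "labY v < 4" by (auto simp: labX_def labY_def)

lemma dbl_AOD:
  assumes dX: "ok_dims LX m" and dY: "ok_dims LY m"
    and oX: "chkO LX labX m cs" and oY: "chkO LY labY m cs" and am: "chkA LX LY labX labY m"
    and lcs: "length cs = 4"
  shows "is_AOD (2*m) cs cs (dbl (mk LX) labX) (dbl (mk LY) labY)
       \<and> full_design (2*m) (dbl (mk LX) labX) \<and> full_design (2*m) (dbl (mk LY) labY)"
proof -
  note wX = mk_wf[OF dX] and wY = mk_wf[OF dY]
  have wfX: "wf_design (2*m) 4 (dbl (mk LX) labX)" "full_design (2*m) (dbl (mk LX) labX)"
    using dbl_wf[OF wX labX_lt] by auto
  have wfY: "wf_design (2*m) 4 (dbl (mk LY) labY)" "full_design (2*m) (dbl (mk LY) labY)"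
    using dbl_wf[OF wY labY_lt] by auto
  have orth: "is_OD (2*m) cs (dbl (mk L) lab)"
    if d: "ok_dims L m" and o: "chkO L lab m cs" and wf: "wf_design (2*m) 4 (dbl (mk L) lab)" for L lab
  proof (rule orth_from_cf)
    show "wf_design (2*m) (length cs) (dbl (mk L) lab)" using wf lcs by simp
    fix i j a b assume i: "i < 2*m" and j: "j < 2*m" and a: "a < length cs" and b: "b < length cs"
    have r: "i div 2 < m" "j div 2 < m" using i j by auto
    have c: "i mod 2 < 2" "j mod 2 < 2" by auto
    have "chk4O (rcf (L!(i div 2)) (L!(j div 2)) a b) (rcf (L!(i div 2)) (L!(j div 2)) b a) (lab a) (lab b)
            (if i div 2 = j div 2 \<and> a = b then 2 * int (cs!a) else 0)"
      using o r a b lcs unfolding chkO_def list_all_iff by auto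
    from chk4O_D[OF this c]
    have "cf (mk L) (mk L) m (i div 2) (j div 2) a b * gg (lab a) (lab b) (i mod 2) (j mod 2)
        + cf (mk L) (mk L) m (i div 2) (j div 2) b a * gg (lab b) (lab a) (i mod 2) (j mod 2)
        = (if i mod 2 = j mod 2 then (if i div 2 = j div 2 \<and> a = b then 2 * int (cs!a) else 0) else 0)"
      using rcf_cf[OF d d r] by simp
    then show "cf (dbl (mk L) lab) (dbl (mk L) lab) (2*m) i j a b + cf (dbl (mk L) lab) (dbl (mk L) lab) (2*m) i j b a
        = (if i = j \<and> a = b then 2 * int (cs!a) else 0)"
      unfolding cf_dbl idx_eq[of 2 i j, simplified] by auto
  qed
  have amic: "(\<Sum>l<2*m. dval (dbl (mk LX) labX) x i l * dval (dbl (mk LY) labY) y j l)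
           = (\<Sum>l<2*m. dval (dbl (mk LY) labY) y i l * dval (dbl (mk LX) labX) x j l)"
    if i: "i < 2*m" and j: "j < 2*m" for x y i j
  proof (rule amic_from_cf[OF wfX(1) wfY(1) i j])
    fix a b :: nat assume a: "a < 4" and b: "b < 4"
    have r: "i div 2 < m" "j div 2 < m" using i j by auto
    have c: "i mod 2 < 2" "j mod 2 < 2" by auto
    have "chk4A (rcf (LX!(i div 2)) (LY!(j div 2)) a b) (rcf (LX!(j div 2)) (LY!(i div 2)) a b) (labX a) (labY b)"
      using am r a b unfolding chkA_def list_all_iff by auto
    from chk4A_D[OF this c]
    show "cf (dbl (mk LX) labX) (dbl (mk LY) labY) (2*m) i j a b = cf (dbl (mk LX) labX) (dbl (mk LY) labY) (2*m) j i a b"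
      unfolding cf_dbl using rcf_cf[OF dX dY r] rcf_cf[OF dX dY r(2) r(1)] by simp
  qed
  show ?thesis unfolding is_AOD_def
    using orth[OF dX oX wfX(1)] orth[OF dY oY wfY(1)] amic wfX(2) wfY(2) by blast
qed



lemma wlist:
  assumes "1 \<le> k"
  shows "map (\<lambda>t. w * wDn t) [0..<Suc k] = [w, w] @ map (\<lambda>j. w * 2^(j-1)) [2..<Suc k]"
proof -
  have u1: "[0..<Suc k] = 0 # [Suc 0..<Suc k]" by (rule upt_conv_Cons) simp
  have u2: "[Suc 0..<Suc k] = Suc 0 # [Suc (Suc 0)..<Suc k]" using assms by (intro upt_conv_Cons) simp
  have "[0..<Suc k] = 0 # 1 # [2..<Suc k]" unfolding u1 u2 numeral_2_eq_2 by simp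
  moreover have "map (\<lambda>t. w * wDn t) [2..<Suc k] = map (\<lambda>j. w * 2^(j-1)) [2..<Suc k]"
  proof (rule map_cong[OF refl])
    fix j assume "j \<in> set [2..<Suc k]"
    then have "2 \<le> j" by (simp del: upt_Suc)
    then have "j = Suc (j - 1)" by simp
    then show "w * wDn j = w * 2^(j-1)" by (metis diff_Suc_1 wDn.simps(2))
  qed
  ultimately show ?thesis by simp
qed

lemma mapc:
  fixes a b :: nat
  assumes "b * 2 = a"
  shows "map (\<lambda>j. a * 2^(j-1)) [2..<Suc k] = map (\<lambda>j. b * 2^j) [2..<Suc k]"
proof (rule map_cong[OF refl])
  fix j assume "j \<in> set [2..<Suc k]"
  then have "2 \<le> j" by (simp del: upt_Suc)
  then have s: "j = Suc (j - 1)" by simp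
  have "b * 2^j = b * 2 * 2^(j-1)" by (subst s) simp
  then show "a * 2^(j-1) = b * 2^j" using assms by simp
qed

theorem family:
  fixes m c w :: nat and X Y :: design
  assumes AOD: "is_AOD m [c,c,c,w] [c,c,c,w] X Y" and fX: "full_design m X" and fY: "full_design m Y" and m: "0 < m"
  shows "exists_full_AOD (2^k*m) ([c*2^k, c*2^k, c*2^k] @ map (\<lambda>t. w * wDn t) [0..<Suc k]) [c*2^k, c*2^k, c*2^k, w*2^k]"
  unfolding exists_full_AOD_def using kron_AOD[OF AOD m, of k] kron_full[OF m fX fY, of k] by blast

theorem main_concrete:
  shows "exists_full_AOD 16 [2,2,2,10] [2,2,2,10]
    \<and> exists_full_AOD 24 [2,2,2,18] [2,2,2,18]
    \<and> (\<forall>n::nat. n > 4 \<longrightarrow>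
          exists_full_AOD (2^n)
            ([2^(n-3), 2^(n-3), 2^(n-3), 10, 10] @ map (\<lambda>j. 5 * 2^j) [2..<n-3])
            [2^(n-3), 2^(n-3), 2^(n-3), 5 * 2^(n-3)])
    \<and> (\<forall>n::nat. n > 3 \<longrightarrow>
          exists_full_AOD (3 * 2^n)
            ([2^(n-2), 2^(n-2), 2^(n-2), 18, 18] @ map (\<lambda>j. 9 * 2^j) [2..<n-2])
            [2^(n-2), 2^(n-2), 2^(n-2), 9 * 2^(n-2)])"
proof -
  have d16: "is_AOD (2*8) [2,2,2,10] [2,2,2,10] (dbl (mk X8) labX) (dbl (mk Y8) labY)
       \<and> full_design (2*8) (dbl (mk X8) labX) \<and> full_design (2*8) (dbl (mk Y8) labY)"
    using c8 by (intro dbl_AOD) auto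
  have d24: "is_AOD (2*12) [2,2,2,18] [2,2,2,18] (dbl (mk X12) labX) (dbl (mk Y12) labY)
       \<and> full_design (2*12) (dbl (mk X12) labX) \<and> full_design (2*12) (dbl (mk Y12) labY)"
    using c12 by (intro dbl_AOD) auto
  have A16: "is_AOD 16 [2,2,2,10] [2,2,2,10] (dbl (mk X8) labX) (dbl (mk Y8) labY)"
    "full_design 16 (dbl (mk X8) labX)" "full_design 16 (dbl (mk Y8) labY)" using d16 by auto
  have A24: "is_AOD 24 [2,2,2,18] [2,2,2,18] (dbl (mk X12) labX) (dbl (mk Y12) labY)"
    "full_design 24 (dbl (mk X12) labX)" "full_design 24 (dbl (mk Y12) labY)" using d24 by auto
  have P1: "exists_full_AOD 16 [2,2,2,10] [2,2,2,10]" unfolding exists_full_AOD_def using A16 by blast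
  have P2: "exists_full_AOD 24 [2,2,2,18] [2,2,2,18]" unfolding exists_full_AOD_def using A24 by blast
  have P3: "exists_full_AOD (2^n)
            ([2^(n-3), 2^(n-3), 2^(n-3), 10, 10] @ map (\<lambda>j. 5 * 2^j) [2..<n-3])
            [2^(n-3), 2^(n-3), 2^(n-3), 5 * 2^(n-3)]" if n: "n > 4" for n :: nat
  proof -
    define k where "k = n - 4"
    have nk: "n = k + 4" and k1: "1 \<le> k" using n unfolding k_def by auto
    have F: "exists_full_AOD (2^k*16) ([2*2^k, 2*2^k, 2*2^k] @ map (\<lambda>t. 10 * wDn t) [0..<Suc k]) [2*2^k, 2*2^k, 2*2^k, 10*2^k]"
      by (rule family[OF A16]) auto
    have e1: "(2::nat)^k*16 = 2^n" unfolding nk by (simp add: power_add)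
    have e2: "(2::nat)^(n-3) = 2*2^k" unfolding nk by simp
    have e3: "[2..<n-3] = [2..<Suc k]" unfolding nk by simp
    have e4: "map (\<lambda>t. 10 * wDn t) [0..<Suc k] = [10, 10] @ map (\<lambda>j. 5 * 2^j) [2..<Suc k]"
      unfolding wlist[OF k1] using mapc[of 5 10 k] by simp
    show ?thesis using F unfolding e1 e2 e3 e4 by (simp add: mult.assoc)
  qed
  have P4: "exists_full_AOD (3 * 2^n)
            ([2^(n-2), 2^(n-2), 2^(n-2), 18, 18] @ map (\<lambda>j. 9 * 2^j) [2..<n-2])
            [2^(n-2), 2^(n-2), 2^(n-2), 9 * 2^(n-2)]" if n: "n > 3" for n :: nat
  proof -
    define k where "k = n - 3"
    have nk: "n = k + 3" and k1: "1 \<le> k" using n unfolding k_def by auto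
    have F: "exists_full_AOD (2^k*24) ([2*2^k, 2*2^k, 2*2^k] @ map (\<lambda>t. 18 * wDn t) [0..<Suc k]) [2*2^k, 2*2^k, 2*2^k, 18*2^k]"
      by (rule family[OF A24]) auto
    have e1: "(2::nat)^k*24 = 3 * 2^n" unfolding nk by (simp add: power_add)
    have e2: "(2::nat)^(n-2) = 2*2^k" unfolding nk by simp
    have e3: "[2..<n-2] = [2..<Suc k]" unfolding nk by simp
    have e4: "map (\<lambda>t. 18 * wDn t) [0..<Suc k] = [18, 18] @ map (\<lambda>j. 9 * 2^j) [2..<Suc k]"
      unfolding wlist[OF k1] using mapc[of 9 18 k] by simp
    show ?thesis using F unfolding e1 e2 e3 e4 by (simp add: mult.assoc)
  qed
  show ?thesis using P1 P2 P3 P4 by blast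
qed


theorem mainTheorem6:
  shows "exists_full_AOD 16 [2,2,2,10] [2,2,2,10]
    \<and> exists_full_AOD 24 [2,2,2,18] [2,2,2,18]
    \<and> (\<forall>n::nat. n > 4 \<longrightarrow>
          exists_full_AOD (2^n)
            ([2^(n-3), 2^(n-3), 2^(n-3), 10, 10] @ map (\<lambda>j. 5 * 2^j) [2..<n-3])
            [2^(n-3), 2^(n-3), 2^(n-3), 5 * 2^(n-3)])
    \<and> (\<forall>n::nat. n > 3 \<longrightarrow>
          exists_full_AOD (3 * 2^n)
            ([2^(n-2), 2^(n-2), 2^(n-2), 18, 18] @ map (\<lambda>j. 9 * 2^j) [2..<n-2])
            [2^(n-2), 2^(n-2), 2^(n-2), 9 * 2^(n-2)])"
  using main_concrete .

end
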